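(* Let $\Gamma:\Delta_{\mathcal{Y}}\rightrightarrows\mathbb{R}^d$ be an elicitable property. The following are equivalent: (1) $\Gamma$ embeds an elicitable finite property $\gamma:\Delta_{\mathcal{Y}}\rightrightarrows\mathcal{R}$; (2) $\mathrm{trim}(\Gamma)$ is a finite set; (3) there is a finite minimum representative set $\mathcal{U}$ for $\Gamma$; (4) there is a finite set $\hat\Theta$ of full-dimensional level sets of $\Gamma$ with $\bigcup\hat\Theta=\Delta_{\mathcal{Y}}$. Moreover, when any of these holds, $\mathrm{trim}(\gamma)=\mathrm{trim}(\Gamma)=\{\Gamma_u:u\in\mathcal{U}\}=\hat\Theta$.
   Context: $\mathcal{Y}$ is a finite label set, $\Delta_{\mathcal{Y}}$ the probability simplex. A property $\Gamma:\Delta_{\mathcal{Y}}\rightrightarrows\mathcal{R}$ maps each $p$ to a nonempty subset of $\mathcal{R}$; it is finite if $\mathcal{R}$ is finite; its level sets are $\Gamma_r=\{p:r\in\Gamma(p)\}$. $\Gamma$ is elicitable if there is a loss $L:\mathcal{R}\to\mathbb{R}^{\mathcal{Y}}_+$ with $\Gamma(p)=\arg\min_r\langle p,L(r)\rangle$ for all $p$ (minimum attained). $\mathcal{S}\subseteq\mathcal{R}$ is representative for $\Gamma$ if $\Gamma(p)\cap\mathcal{S}\neq\emptyset$ for all $p$; minimum representative if it has smallest cardinality among representative sets. A level set is full-dimensional if its affine hull has dimension $|\mathcal{Y}|-1$. $\mathrm{red}(\Gamma)=\{r:\exists r',\ \Gamma_r\subsetneq\Gamma_{r'}\}$ and $\mathrm{trim}(\Gamma)=\{\Gamma_r:r\in\mathcal{R}\setminus\mathrm{red}(\Gamma)\}$.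 $\Gamma:\Delta_{\mathcal{Y}}\rightrightarrows\mathbb{R}^d$ embeds a finite property $\gamma:\Delta_{\mathcal{Y}}\rightrightarrows\mathcal{R}$ if there exist a representative set $\mathcal{S}\subseteq\mathcal{R}$ for $\gamma$ and an injective $\varphi:\mathcal{S}\to\mathbb{R}^d$ with $\gamma_s=\Gamma_{\varphi(s)}$ for all $s\in\mathcal{S}$. *)

theory Defs
  imports "HOL-Analysis.Analysis"
begin

definition prob_simplex :: "(real ^ 'y) set" where
  "prob_simplex = {p. (\<forall>y. 0 \<le> p $ y) \<and> (\<Sum>y\<in>UNIV. p $ y) = 1}"

definition level :: "(real ^ 'y \<Rightarrow> 'r set) \<Rightarrow> 'r \<Rightarrow> (real ^ 'y) set" where
  "level G r = {p \<in> prob_simplex. r \<in> G p}"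

definition elicitable :: "'r set \<Rightarrow> (real ^ 'y \<Rightarrow> 'r set) \<Rightarrow> bool" where
  "elicitable R G \<longleftrightarrow> (\<exists>L :: 'r \<Rightarrow> real ^ 'y.
      (\<forall>r\<in>R. \<forall>y. 0 \<le> L r $ y) \<and>
      (\<forall>p\<in>prob_simplex. G p = {r\<in>R. \<forall>r'\<in>R. p \<bullet> L r \<le> p \<bullet> L r'} \<and> G p \<noteq> {}))"

definition representative :: "'r set \<Rightarrow> (real ^ 'y \<Rightarrow> 'r set) \<Rightarrow> 'r set \<Rightarrow> bool" where
  "representative R G S \<longleftrightarrow> S \<subseteq> R \<and> (\<forall>p\<in>prob_simplex. G p \<inter> S \<noteq> {})"

text \<open>Minimum representative: representative, and of cardinality at most that of every
  representative set (|S| \<le> |S'| means an injection S \<rightarrow> S').\<close>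
definition min_representative :: "'r set \<Rightarrow> (real ^ 'y \<Rightarrow> 'r set) \<Rightarrow> 'r set \<Rightarrow> bool" where
  "min_representative R G S \<longleftrightarrow> representative R G S \<and>
     (\<forall>S'. representative R G S' \<longrightarrow> (\<exists>f. inj_on f S \<and> f ` S \<subseteq> S'))"

definition full_dim :: "(real ^ 'y) set \<Rightarrow> bool" where
  "full_dim A \<longleftrightarrow> aff_dim A = int CARD('y) - 1"

definition red :: "'r set \<Rightarrow> (real ^ 'y \<Rightarrow> 'r set) \<Rightarrow> 'r set" where
  "red R G = {r\<in>R. \<exists>r'\<in>R. level G r \<subset> level G r'}"

definition trim :: "'r set \<Rightarrow> (real ^ 'y \<Rightarrow> 'r set) \<Rightarrow> (real ^ 'y) set set" where
  "trim R G = level G ` (R - red R G)"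

definition embeds :: "(real ^ 'y \<Rightarrow> 'd set) \<Rightarrow> 'r set \<Rightarrow> (real ^ 'y \<Rightarrow> 'r set) \<Rightarrow> bool" where
  "embeds G R g \<longleftrightarrow> (\<exists>S (\<phi> :: 'r \<Rightarrow> 'd). representative R g S \<and> inj_on \<phi> S \<and>
       (\<forall>s\<in>S. level g s = level G (\<phi> s)))"

end

theory Submission
  imports Defs
begin

lemma level_char:
  assumes H: "\<forall>p\<in>prob_simplex. G p = {r\<in>R. \<forall>r'\<in>R. p \<bullet> L r \<le> p \<bullet> L r'}"
  shows "level G r = {p\<in>prob_simplex. r \<in> R \<and> (\<forall>r'\<in>R. p \<bullet> L r \<le> p \<bullet> L r')}"
  using H unfolding level_def by auto

lemma simplex_mid:
  assumes "x \<in> prob_simplex" "y \<in> prob_simplex"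
  shows "(1/2) *\<^sub>R x + (1/2) *\<^sub>R y \<in> (prob_simplex :: (real^'y) set)"
proof -
  have "(\<Sum>i\<in>UNIV. ((1/2) *\<^sub>R x + (1/2) *\<^sub>R y) $ i) = (1/2) * (\<Sum>i\<in>UNIV. x $ i) + (1/2) * (\<Sum>i\<in>UNIV. y $ i)"
    by (simp add: sum.distrib sum_distrib_left)
  then show ?thesis using assms unfolding prob_simplex_def by auto
qed

lemma level_mid:
  assumes H: "\<forall>p\<in>prob_simplex. G p = {r\<in>R. \<forall>r'\<in>R. p \<bullet> L r \<le> p \<bullet> L r'}"
    and "x \<in> level G r" "y \<in> level G r"
  shows "(1/2) *\<^sub>R x + (1/2) *\<^sub>R y \<in> level G r"
  using assms(2,3) simplex_mid unfolding level_char[OF H]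
  by (auto simp: inner_add_left intro!: add_mono)

lemma avg:
  fixes a :: "'j \<Rightarrow> 'v::real_inner"
  assumes "finite J" "C \<noteq> {}" "\<forall>x\<in>C. \<forall>y\<in>C. (1/2) *\<^sub>R x + (1/2) *\<^sub>R y \<in> C"
    "\<forall>j\<in>J. \<forall>x\<in>C. 0 \<le> x \<bullet> a j" "\<forall>j\<in>J. \<exists>x\<in>C. 0 < x \<bullet> a j"
  shows "\<exists>q\<in>C. \<forall>j\<in>J. 0 < q \<bullet> a j"
  using assms
proof (induction J rule: finite_induct)
  case empty
  then show ?case by auto
next
  case (insert j J)
  then obtain q where q: "q \<in> C" "\<forall>i\<in>J. 0 < q \<bullet> a i" by auto
  obtain x where x: "x \<in> C" "0 < x \<bullet> a j" using insert by auto
  have "(1/2) *\<^sub>R q + (1/2) *\<^sub>R x \<in> C" using insert q x by auto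
  moreover have "\<forall>i\<in>insert j J. 0 < ((1/2) *\<^sub>R q + (1/2) *\<^sub>R x) \<bullet> a i"
  proof
    fix i assume i: "i \<in> insert j J"
    show "0 < ((1/2) *\<^sub>R q + (1/2) *\<^sub>R x) \<bullet> a i"
    proof (cases "i = j")
      case True
      have "0 \<le> q \<bullet> a j" using insert q by auto
      then show ?thesis using True x by (simp add: inner_add_left)
    next
      case False
      then have "i \<in> J" using i by auto
      then have "0 < q \<bullet> a i" "0 \<le> x \<bullet> a i" using q insert x by auto
      then show ?thesis by (simp add: inner_add_left)
    qed
  qed
  ultimately show ?case by blast
qed

lemma cover:
  assumes H: "\<forall>p\<in>prob_simplex. G p = {r\<in>R. \<forall>r'\<in>R. p \<bullet> L r \<le> p \<bullet> L r'}"
    and r: "r \<in> R" and J: "finite J" "J \<subseteq> R" "J \<noteq> {}"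
    and sub: "level G r \<subseteq> (\<Union>j\<in>J. level G j)"
  shows "\<exists>j\<in>J. level G r \<subseteq> level G j"
proof (rule ccontr)
  assume "\<not> ?thesis"
  then have nx: "\<forall>j\<in>J. \<exists>x\<in>level G r. x \<notin> level G j" by auto
  have mem: "x \<in> level G j \<longleftrightarrow> x \<bullet> (L j - L r) \<le> 0" if "x \<in> level G r" "j \<in> J" for x j
    using that J r unfolding level_char[OF H] by (auto simp: inner_diff_right)
  have "\<exists>q\<in>level G r. \<forall>j\<in>J. 0 < q \<bullet> (L j - L r)"
  proof (rule avg[OF J(1)])
    show "level G r \<noteq> {}" using nx J(3) by auto
    show "\<forall>x\<in>level G r. \<forall>y\<in>level G r. (1/2) *\<^sub>R x + (1/2) *\<^sub>R y \<in> level G r"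
      using level_mid[OF H] by blast
    show "\<forall>j\<in>J. \<forall>x\<in>level G r. 0 \<le> x \<bullet> (L j - L r)"
      using J r unfolding level_char[OF H] by (auto simp: inner_diff_right)
    show "\<forall>j\<in>J. \<exists>x\<in>level G r. 0 < x \<bullet> (L j - L r)"
      using nx mem by force
  qed
  then obtain q where "q \<in> level G r" "\<forall>j\<in>J. 0 < q \<bullet> (L j - L r)" by auto
  then show False using sub mem by fastforce
qed


lemma chain_dim:
  fixes G :: "real^'y \<Rightarrow> 'r set"
  assumes H: "\<forall>p\<in>prob_simplex. G p = {r\<in>UNIV. \<forall>r'\<in>UNIV. p \<bullet> L r \<le> p \<bullet> L r'}"
    and ps: "level G r \<subset> level G r'"
  shows "dim (level G r) < dim (level G r')"
proof -
  define a where "a = L r - L r'"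
  have eq: "level G r = level G r' \<inter> {x. x \<bullet> a = 0}"
  proof
    show "level G r \<subseteq> level G r' \<inter> {x. x \<bullet> a = 0}"
    proof
      fix x assume x: "x \<in> level G r"
      then have "x \<in> level G r'" using ps by auto
      then have "x \<bullet> L r' \<le> x \<bullet> L r" "x \<bullet> L r \<le> x \<bullet> L r'"
        using x unfolding level_char[OF H] by auto
      then show "x \<in> level G r' \<inter> {x. x \<bullet> a = 0}"
        using \<open>x \<in> level G r'\<close> by (simp add: a_def inner_diff_right)
    qed
    show "level G r' \<inter> {x. x \<bullet> a = 0} \<subseteq> level G r"
    proof
      fix x assume x: "x \<in> level G r' \<inter> {x. x \<bullet> a = 0}"
      then have "x \<bullet> L r = x \<bullet> L r'" by (simp add: a_def inner_diff_right)
      then show "x \<in> level G r" using x unfolding level_char[OF H] by auto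
    qed
  qed
  then obtain q where q: "q \<in> level G r'" "q \<bullet> a \<noteq> 0" using ps by auto
  have "span (level G r) \<subseteq> span (level G r') \<inter> {x. x \<bullet> a = 0}"
  proof -
    have "span (level G r) \<subseteq> {x. x \<bullet> a = 0}"
      by (rule span_minimal) (auto simp: eq subspace_def inner_add_left)
    moreover have "span (level G r) \<subseteq> span (level G r')"
      using ps by (simp add: span_mono)
    ultimately show ?thesis by auto
  qed
  moreover have "q \<in> span (level G r')" using q by (simp add: span_base)
  ultimately have "span (level G r) \<subset> span (level G r')" using q by auto
  then show ?thesis by (rule dim_psubset)
qed

lemma maximal_above:
  fixes G :: "real^'y \<Rightarrow> 'r set"
  assumes H: "\<forall>p\<in>prob_simplex. G p = {r\<in>UNIV. \<forall>r'\<in>UNIV. p \<bullet> L r \<le> p \<bullet> L r'}"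
  shows "\<exists>w. level G r \<subseteq> level G w \<and> w \<notin> red UNIV G"
proof -
  have "\<forall>r. CARD('y) - dim (level G r) = n \<longrightarrow> (\<exists>w. level G r \<subseteq> level G w \<and> w \<notin> red UNIV G)" for n
  proof (induction n rule: less_induct)
    case (less n)
    show ?case
    proof (intro allI impI)
      fix r assume n: "CARD('y) - dim (level G r) = n"
      show "\<exists>w. level G r \<subseteq> level G w \<and> w \<notin> red UNIV G"
      proof (cases "r \<in> red UNIV G")
        case False then show ?thesis by auto
      next
        case True
        then obtain r' where r': "level G r \<subset> level G r'" unfolding red_def by auto
        have d: "dim (level G r) < dim (level G r')" by (rule chain_dim[OF H r'])
        have "dim (level G r') \<le> CARD('y)"
          using dim_subset_UNIV[where 'a="real^'y"] by simp
        then have "CARD('y) - dim (level G r') < n" using d n by linarith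
        then obtain w where "level G r' \<subseteq> level G w" "w \<notin> red UNIV G" using less by blast
        then show ?thesis using r' by blast
      qed
    qed
  qed
  then show ?thesis by blast
qed

lemma simplex_hyp: "prob_simplex \<subseteq> {x::real^'y. (\<chi> i. 1) \<bullet> x = 1}"
  unfolding prob_simplex_def by (auto simp: inner_vec_def)

lemma level_sub_simplex: "level G r \<subseteq> prob_simplex"
  unfolding level_def by auto

lemma aff_dim_simplex_sub:
  fixes A :: "(real^'y) set"
  assumes "A \<subseteq> prob_simplex"
  shows "aff_dim A = int (dim A) - 1"
proof -
  have "affine hull A \<subseteq> {x::real^'y. (\<chi> i. 1) \<bullet> x = 1}"
    using assms simplex_hyp by (intro hull_minimal) (auto simp: affine_hyperplane)
  then have n0: "0 \<notin> affine hull A" by auto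
  have "aff_dim (insert 0 A) = aff_dim A + 1" using n0 by (simp add: aff_dim_insert)
  moreover have "aff_dim (insert 0 A) = int (dim (insert 0 A))"
    by (rule aff_dim_zero) (simp add: hull_inc)
  moreover have "dim (insert 0 A) = dim A" by (simp add: dim_insert span_zero)
  ultimately show ?thesis by simp
qed

lemma full_dim_iff:
  fixes A :: "(real^'y) set"
  assumes "A \<subseteq> prob_simplex"
  shows "full_dim A \<longleftrightarrow> dim A = CARD('y)"
  unfolding full_dim_def aff_dim_simplex_sub[OF assms] by linarith

lemma dim_le_card: "dim (A :: (real^'y) set) \<le> CARD('y)"
  using dim_subset_UNIV[where 'a="real^'y"] by simp

lemma full_dim_nonred:
  fixes G :: "real^'y \<Rightarrow> 'r set"
  assumes H: "\<forall>p\<in>prob_simplex. G p = {r\<in>UNIV. \<forall>r'\<in>UNIV. p \<bullet> L r \<le> p \<bullet> L r'}"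
    and f: "full_dim (level G u)"
  shows "u \<notin> red UNIV G"
proof
  assume "u \<in> red UNIV G"
  then obtain r' where r': "level G u \<subset> level G r'" unfolding red_def by auto
  have "dim (level G u) < dim (level G r')" by (rule chain_dim[OF H r'])
  moreover have "dim (level G u) = CARD('y)" using f full_dim_iff[OF level_sub_simplex[of G u]] by simp
  ultimately show False using dim_le_card[of "level G r'"] by simp
qed

definition unif :: "real^'y" where "unif = (\<chi> i. 1 / real CARD('y))"

lemma unif_simplex: "(unif :: real^'y) \<in> prob_simplex"
proof -
  have c: "real CARD('y) \<noteq> 0" using card_gt_0_iff[of "UNIV::'y set"] by simp
  have "(\<Sum>i\<in>UNIV. (unif::real^'y) $ i) = real CARD('y) * (1 / real CARD('y))"
    unfolding unif_def by simp
  also have "\<dots> = 1" using c by simp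
  finally show ?thesis unfolding prob_simplex_def unif_def by simp
qed

lemma closed_simplex: "closed (prob_simplex :: (real^'y) set)"
proof -
  have "prob_simplex = {x::real^'y. \<forall>i. 0 \<le> x $ i} \<inter> {x. (\<chi> i. 1) \<bullet> x = 1}"
    unfolding prob_simplex_def by (auto simp: inner_vec_def)
  then show ?thesis by (metis closed_Int closed_positive_orthant closed_hyperplane)
qed

lemma closed_level:
  fixes G :: "real^'y \<Rightarrow> 'r set"
  assumes H: "\<forall>p\<in>prob_simplex. G p = {r\<in>UNIV. \<forall>r'\<in>UNIV. p \<bullet> L r \<le> p \<bullet> L r'}"
  shows "closed (level G u)"
proof -
  have "level G u = prob_simplex \<inter> (\<Inter>r'. {x. (L u - L r') \<bullet> x \<le> 0})"
    unfolding level_char[OF H] by (auto simp: inner_diff_right inner_commute)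
  then show ?thesis by (simp add: closed_Int closed_INT closed_halfspace_le closed_simplex)
qed


lemma dense_full:
  fixes G :: "real^'y \<Rightarrow> 'r set"
  assumes H: "\<forall>p\<in>prob_simplex. G p = {r\<in>UNIV. \<forall>r'\<in>UNIV. p \<bullet> L r \<le> p \<bullet> L r'}"
    and U: "finite U" and cov: "\<forall>p\<in>prob_simplex. \<exists>u\<in>U. p \<in> level G u"
    and p: "p \<in> prob_simplex"
  shows "\<exists>u\<in>U. full_dim (level G u) \<and> p \<in> level G u"
proof (rule ccontr)
  assume np: "\<not> (\<exists>u\<in>U. full_dim (level G u) \<and> p \<in> level G u)"
  define J where "J = {u\<in>U. full_dim (level G u)}"
  define F where "F = (\<Union>u\<in>J. level G u)"
  have "finite J" using U by (simp add: J_def)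
  then have cF: "closed F" unfolding F_def using closed_level[OF H] by blast
  have "p \<notin> F" using np by (auto simp: F_def J_def)
  moreover have "open (- F)" using cF by auto
  ultimately obtain e where e: "e > 0" "ball p e \<subseteq> - F"
    using open_contains_ball by blast
  define n where "n = norm (unif - p)"
  define t where "t = min (1/2) (e / (2 * (n + 1)))"
  have n0: "n \<ge> 0" by (simp add: n_def)
  have t01: "0 < t" using e n0 by (simp add: t_def)
  have t02: "t \<le> 1/2" unfolding t_def by (rule min.cobounded1)
  note t0 = t01 t02
  have "t * n \<le> (e / (2 * (n + 1))) * n"
    using n0 by (intro mult_right_mono) (auto simp: t_def)
  also have "\<dots> < e" using e n0 by (simp add: field_simps) (smt (verit) mult_nonneg_nonneg)
  finally have tn: "t * n < e" .
  define x0 where "x0 = p + t *\<^sub>R (unif - p)"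
  have x0i: "x0 $ i = (1 - t) * p $ i + t * (1 / real CARD('y))" for i
    by (simp add: x0_def unif_def algebra_simps)
  have cpos: "0 < real CARD('y)" using card_gt_0_iff[of "UNIV::'y set"] by simp
  have x0pos: "\<forall>i. 0 < x0 $ i"
  proof
    fix i
    have "0 \<le> p $ i" using p by (simp add: prob_simplex_def)
    then have "0 \<le> (1 - t) * p $ i" using t0 by simp
    moreover have "0 < t * (1 / real CARD('y))" using t0 cpos by simp
    ultimately show "0 < x0 $ i" using x0i by simp
  qed
  have x0sum: "(\<Sum>i\<in>UNIV. x0 $ i) = 1"
  proof -
    have "(\<Sum>i\<in>UNIV. x0 $ i) = (1 - t) * (\<Sum>i\<in>UNIV. p $ i) + t * (\<Sum>i\<in>UNIV. (unif::real^'y) $ i)"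
      by (simp add: x0_def unif_def algebra_simps sum.distrib sum_distrib_left sum_subtractf)
    also have "\<dots> = 1" using p unif_simplex[where 'y='y] by (simp add: prob_simplex_def)
    finally show ?thesis .
  qed
  have "dist p x0 = t * n" by (simp add: x0_def dist_norm n_def t0 less_imp_le)
  then have "x0 \<in> ball p e" using tn by simp
  then have x0F: "x0 \<notin> F" using e by auto
  define P where "P = {x::real^'y. \<forall>i. 0 < x $ i}"
  have oP: "open P"
  proof -
    have "P = (\<Inter>i. {x::real^'y. x $ i > 0})" by (auto simp: P_def)
    then show ?thesis by (simp add: open_INT open_halfspace_component_gt_cart)
  qed
  have spos: "0 < (\<Sum>i\<in>UNIV. x $ i)" if "x \<in> P" for x
    using that unfolding P_def by (intro sum_pos) auto
  define h where "h = (\<lambda>x::real^'y. (1 / (\<Sum>i\<in>UNIV. x $ i)) *\<^sub>R x)"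
  have ch: "continuous_on P h"
    unfolding h_def using spos
    by (intro continuous_intros) (metis less_irrefl)
  define W where "W = h -` (- F) \<inter> P"
  have oW: "open W" unfolding W_def using ch oP cF continuous_on_open_vimage by blast
  have "h x0 = x0" using x0sum by (simp add: h_def)
  then have "x0 \<in> W" using x0F x0pos by (simp add: W_def P_def)
  then have neW: "W \<noteq> {}" by auto
  have sub: "W \<subseteq> (\<Union>u\<in>U - J. span (level G u))"
  proof
    fix x assume x: "x \<in> W"
    define s where "s = (\<Sum>i\<in>UNIV. x $ i)"
    have s0: "0 < s" using x spos by (simp add: s_def W_def)
    have "h x \<in> prob_simplex"
    proof -
      have "\<forall>i. 0 \<le> h x $ i" using x s0 by (auto simp: h_def W_def P_def s_def[symmetric] less_imp_le)
      moreover have "(\<Sum>i\<in>UNIV. h x $ i) = 1"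
        using s0 by (simp add: h_def sum_divide_distrib[symmetric] s_def)
      ultimately show ?thesis by (simp add: prob_simplex_def)
    qed
    then obtain u where u: "u \<in> U" "h x \<in> level G u" using cov by auto
    have "h x \<notin> F" using x by (simp add: W_def)
    then have "u \<notin> J" using u by (auto simp: F_def)
    have "x = s *\<^sub>R h x" using s0 by (simp add: h_def s_def)
    then have "x \<in> span (level G u)" using u by (metis span_base span_scale)
    then show "x \<in> (\<Union>u\<in>U - J. span (level G u))" using u \<open>u \<notin> J\<close> by auto
  qed
  have "negligible (\<Union>u\<in>U - J. span (level G u))"
  proof (rule negligible_Union)
    show "finite ((\<lambda>u. span (level G u)) ` (U - J))" using U by simp
  next
    fix T assume "T \<in> (\<lambda>u. span (level G u)) ` (U - J)"
    then obtain u where u: "u \<in> U" "u \<notin> J" "T = span (level G u)" by auto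
    then have "\<not> full_dim (level G u)" by (simp add: J_def)
    then have "dim (level G u) \<noteq> CARD('y)" using full_dim_iff[OF level_sub_simplex[of G u]] by simp
    then have "dim (level G u) < CARD('y)" using dim_le_card[of "level G u"] by simp
    then show "negligible T" using u by (intro negligible_lowdim) simp
  qed
  then have "negligible W" using sub negligible_subset by blast
  then show False using open_not_negligible[OF oW neW] by simp
qed

lemma avoid:
  assumes H: "\<forall>p\<in>prob_simplex. G p = {r\<in>R. \<forall>r'\<in>R. p \<bullet> L r \<le> p \<bullet> L r'}"
    and r: "r \<in> R" and J: "finite J" "J \<subseteq> R" and ne: "level G r \<noteq> {}"
    and nsub: "\<forall>j\<in>J. \<not> level G r \<subseteq> level G j"
  shows "\<exists>q\<in>level G r. \<forall>j\<in>J. q \<notin> level G j"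
proof -
  have nx: "\<forall>j\<in>J. \<exists>x\<in>level G r. x \<notin> level G j" using nsub by auto
  have mem: "x \<in> level G j \<longleftrightarrow> x \<bullet> (L j - L r) \<le> 0" if "x \<in> level G r" "j \<in> J" for x j
    using that J r unfolding level_char[OF H] by (auto simp: inner_diff_right)
  have "\<exists>q\<in>level G r. \<forall>j\<in>J. 0 < q \<bullet> (L j - L r)"
  proof (rule avg[OF J(1) ne])
    show "\<forall>x\<in>level G r. \<forall>y\<in>level G r. (1/2) *\<^sub>R x + (1/2) *\<^sub>R y \<in> level G r"
      using level_mid[OF H] by blast
    show "\<forall>j\<in>J. \<forall>x\<in>level G r. 0 \<le> x \<bullet> (L j - L r)"
      using J r unfolding level_char[OF H] by (auto simp: inner_diff_right)
    show "\<forall>j\<in>J. \<exists>x\<in>level G r. 0 < x \<bullet> (L j - L r)"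
      using nx mem by force
  qed
  then show ?thesis using mem by force
qed

lemma full_lemma:
  fixes G :: "real^'y \<Rightarrow> 'r set"
  assumes H: "\<forall>p\<in>prob_simplex. G p = {r\<in>UNIV. \<forall>r'\<in>UNIV. p \<bullet> L r \<le> p \<bullet> L r'}"
    and U: "finite U" and cov: "\<forall>p\<in>prob_simplex. \<exists>u\<in>U. p \<in> level G u"
    and u0: "u0 \<notin> red UNIV G"
  shows "full_dim (level G u0)"
proof -
  define J where "J = {u\<in>U. full_dim (level G u)}"
  have dn: "\<forall>p\<in>prob_simplex. \<exists>u\<in>J. p \<in> level G u"
    using dense_full[OF H U cov] by (auto simp: J_def)
  then have "J \<noteq> {}" using unif_simplex[where 'y='y] by blast
  moreover have "level G u0 \<subseteq> (\<Union>j\<in>J. level G j)"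
  proof
    fix x assume "x \<in> level G u0"
    then have "x \<in> prob_simplex" using level_sub_simplex[of G u0] by blast
    then show "x \<in> (\<Union>j\<in>J. level G j)" using dn by blast
  qed
  moreover have "finite J" using U by (simp add: J_def)
  ultimately obtain j where j: "j \<in> J" "level G u0 \<subseteq> level G j"
    using cover[OF H, of u0 J] by auto
  then have "level G u0 = level G j" using u0 unfolding red_def by auto
  then show ?thesis using j by (simp add: J_def)
qed

lemma trim_sub:
  fixes G :: "real^'y \<Rightarrow> 'r set"
  assumes H: "\<forall>p\<in>prob_simplex. G p = {r\<in>UNIV. \<forall>r'\<in>UNIV. p \<bullet> L r \<le> p \<bullet> L r'}"
    and U: "finite U" and cov: "\<forall>p\<in>prob_simplex. \<exists>u\<in>U. p \<in> level G u"
    and r: "r \<notin> red UNIV G"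
  shows "\<exists>u\<in>U. level G r = level G u"
proof -
  have "U \<noteq> {}" using cov unif_simplex[where 'y='y] by blast
  moreover have "level G r \<subseteq> (\<Union>j\<in>U. level G j)"
  proof
    fix x assume "x \<in> level G r"
    then have "x \<in> prob_simplex" using level_sub_simplex[of G r] by blast
    then show "x \<in> (\<Union>j\<in>U. level G j)" using cov by blast
  qed
  ultimately obtain j where j: "j \<in> U" "level G r \<subseteq> level G j"
    using cover[OF H, of r U] U by auto
  then show ?thesis using r unfolding red_def by auto
qed

lemma cov_trim:
  fixes G :: "real^'y \<Rightarrow> 'r set"
  assumes H: "\<forall>p\<in>prob_simplex. G p = {r\<in>UNIV. \<forall>r'\<in>UNIV. p \<bullet> L r \<le> p \<bullet> L r'}"
    and NE: "\<forall>p\<in>prob_simplex. G p \<noteq> {}"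
    and p: "p \<in> prob_simplex"
  shows "\<exists>w. w \<notin> red UNIV G \<and> p \<in> level G w"
proof -
  obtain r where "r \<in> G p" using NE p by auto
  then have "p \<in> level G r" using p by (simp add: level_def)
  then show ?thesis using maximal_above[OF H, of r] by blast
qed

lemma trim_reps:
  fixes G :: "real^'y \<Rightarrow> 'r set"
  assumes "finite (trim UNIV G)"
  shows "\<exists>U. finite U \<and> (\<forall>u\<in>U. u \<notin> red UNIV G) \<and> level G ` U = trim UNIV G \<and> inj_on (level G) U"
proof -
  define c where "c = (\<lambda>T. SOME u. u \<notin> red UNIV G \<and> T = level G u)"
  have c: "c T \<notin> red UNIV G \<and> T = level G (c T)" if "T \<in> trim UNIV G" for T
  proof -
    have "\<exists>u. u \<notin> red UNIV G \<and> T = level G u" using that unfolding trim_def by auto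
    then show ?thesis unfolding c_def by (rule someI_ex)
  qed
  define U where "U = c ` trim UNIV G"
  have "finite U" using assms by (simp add: U_def)
  moreover have "\<forall>u\<in>U. u \<notin> red UNIV G" using c by (auto simp: U_def)
  moreover have "level G ` U = trim UNIV G"
  proof
    show "level G ` U \<subseteq> trim UNIV G"
    proof
      fix x assume "x \<in> level G ` U"
      then obtain T where "T \<in> trim UNIV G" "x = level G (c T)" by (auto simp: U_def)
      then show "x \<in> trim UNIV G" using c by metis
    qed
    show "trim UNIV G \<subseteq> level G ` U"
    proof
      fix T assume T: "T \<in> trim UNIV G"
      then have "T = level G (c T)" using c by blast
      moreover have "c T \<in> U" using T by (simp add: U_def)
      ultimately show "T \<in> level G ` U" by blast
    qed
  qed
  moreover have "inj_on (level G) U"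
  proof (rule inj_onI)
    fix u v assume "u \<in> U" "v \<in> U" "level G u = level G v"
    then obtain T1 T2 where "T1 \<in> trim UNIV G" "T2 \<in> trim UNIV G" "u = c T1" "v = c T2"
      "level G u = level G v" by (auto simp: U_def)
    then show "u = v" using c by metis
  qed
  ultimately show ?thesis by blast
qed

lemma rep_cov:
  assumes "representative R G U"
  shows "\<forall>p\<in>prob_simplex. \<exists>u\<in>U. p \<in> level G u"
  using assms unfolding representative_def level_def by blast

lemma trim_cov_U:
  fixes G :: "real^'y \<Rightarrow> 'r set"
  assumes H: "\<forall>p\<in>prob_simplex. G p = {r\<in>UNIV. \<forall>r'\<in>UNIV. p \<bullet> L r \<le> p \<bullet> L r'}"
    and NE: "\<forall>p\<in>prob_simplex. G p \<noteq> {}"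
    and fin: "finite (trim UNIV G)"
  shows "\<exists>U. finite U \<and> (\<forall>u\<in>U. u \<notin> red UNIV G) \<and> level G ` U = trim UNIV G
           \<and> inj_on (level G) U \<and> (\<forall>p\<in>prob_simplex. \<exists>u\<in>U. p \<in> level G u)"
proof -
  obtain U where U: "finite U" "\<forall>u\<in>U. u \<notin> red UNIV G" "level G ` U = trim UNIV G"
    "inj_on (level G) U" using trim_reps[OF fin] by blast
  have "\<exists>u\<in>U. p \<in> level G u" if p: "p \<in> prob_simplex" for p
  proof -
    obtain w where w: "w \<notin> red UNIV G" "p \<in> level G w" using cov_trim[OF H NE p] by blast
    then have "level G w \<in> trim UNIV G" unfolding trim_def by blast
    then obtain u where "u \<in> U" "level G w = level G u" using U(3) by (metis imageE)
    then show ?thesis using w by auto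
  qed
  then show ?thesis using U by blast
qed

lemma nonred_ne:
  fixes G :: "real^'y \<Rightarrow> 'r set"
  assumes H: "\<forall>p\<in>prob_simplex. G p = {r\<in>UNIV. \<forall>r'\<in>UNIV. p \<bullet> L r \<le> p \<bullet> L r'}"
    and NE: "\<forall>p\<in>prob_simplex. G p \<noteq> {}"
    and u: "u \<notin> red UNIV G"
  shows "level G u \<noteq> {}"
proof
  assume e: "level G u = {}"
  obtain w where w: "w \<notin> red UNIV G" "unif \<in> level G w"
    using cov_trim[OF H NE unif_simplex] by blast
  then have "level G u \<subset> level G w" using e by auto
  then show False using u unfolding red_def by auto
qed

lemma P12:
  fixes G :: "real^'y \<Rightarrow> 'd set" and g :: "real^'y \<Rightarrow> 'r set"
  assumes H: "\<forall>p\<in>prob_simplex. G p = {r\<in>UNIV. \<forall>r'\<in>UNIV. p \<bullet> L r \<le> p \<bullet> L r'}"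
    and R: "finite R" and emb: "embeds G R g"
  shows "finite (trim UNIV G)"
proof -
  obtain S \<phi> where S: "representative R g S" "inj_on \<phi> S" "\<forall>s\<in>S. level g s = level G (\<phi> s)"
    using emb unfolding embeds_def by blast
  have fS: "finite S" using S(1) R unfolding representative_def by (metis finite_subset)
  have cov: "\<forall>p\<in>prob_simplex. \<exists>u\<in>\<phi> ` S. p \<in> level G u"
    using rep_cov[OF S(1)] S(3) by fastforce
  have "trim UNIV G \<subseteq> level G ` (\<phi> ` S)"
  proof
    fix x assume "x \<in> trim UNIV G"
    then obtain r where r: "r \<notin> red UNIV G" "x = level G r" unfolding trim_def by blast
    then show "x \<in> level G ` (\<phi> ` S)" using trim_sub[OF H finite_imageI[OF fS] cov r(1)] r(2) by blast
  qed
  then show ?thesis using fS finite_subset by blast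
qed

lemma P32:
  fixes G :: "real^'y \<Rightarrow> 'r set"
  assumes H: "\<forall>p\<in>prob_simplex. G p = {r\<in>UNIV. \<forall>r'\<in>UNIV. p \<bullet> L r \<le> p \<bullet> L r'}"
    and U: "finite U" "representative UNIV G U"
  shows "trim UNIV G \<subseteq> level G ` U"
proof
  fix x assume "x \<in> trim UNIV G"
  then obtain r where r: "r \<notin> red UNIV G" "x = level G r" unfolding trim_def by blast
  then show "x \<in> level G ` U" using trim_sub[OF H U(1) rep_cov[OF U(2)] r(1)] r(2) by blast
qed


lemma P23:
  fixes G :: "real^'y \<Rightarrow> 'r set"
  assumes H: "\<forall>p\<in>prob_simplex. G p = {r\<in>UNIV. \<forall>r'\<in>UNIV. p \<bullet> L r \<le> p \<bullet> L r'}"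
    and NE: "\<forall>p\<in>prob_simplex. G p \<noteq> {}"
    and fin: "finite (trim UNIV G)"
  shows "\<exists>U. finite U \<and> min_representative UNIV G U"
proof -
  obtain U where U: "finite U" "\<forall>u\<in>U. u \<notin> red UNIV G" "level G ` U = trim UNIV G"
    "inj_on (level G) U" "\<forall>p\<in>prob_simplex. \<exists>u\<in>U. p \<in> level G u"
    using trim_cov_U[OF H NE fin] by blast
  have rep: "representative UNIV G U"
    unfolding representative_def using U(5) unfolding level_def by blast
  have qex: "\<exists>q. q \<in> level G u \<and> (\<forall>v\<in>U - {u}. q \<notin> level G v)" if u: "u \<in> U" for u
  proof -
    have nsub: "\<forall>v\<in>U - {u}. \<not> level G u \<subseteq> level G v"
    proof (intro ballI notI)
      fix v assume v: "v \<in> U - {u}" and sub: "level G u \<subseteq> level G v"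
      then have "level G u = level G v" using U(2) u unfolding red_def by auto
      then show False using U(4) u v unfolding inj_on_def by auto
    qed
    show ?thesis
      using avoid[OF H _ finite_Diff[OF U(1)] _ nonred_ne[OF H NE] nsub] U(2) u by blast
  qed
  define q where "q = (\<lambda>u. SOME q. q \<in> level G u \<and> (\<forall>v\<in>U - {u}. q \<notin> level G v))"
  have q: "q u \<in> level G u \<and> (\<forall>v\<in>U - {u}. q u \<notin> level G v)" if "u \<in> U" for u
    unfolding q_def using qex[OF that] by (rule someI_ex)
  have "\<exists>f. inj_on f U \<and> f ` U \<subseteq> S'" if S': "representative UNIV G S'" for S'
  proof -
    have sex: "\<exists>s. s \<in> S' \<and> s \<in> G (q u)" if "u \<in> U" for u
    proof -
      have "q u \<in> prob_simplex" using q[OF that] unfolding level_def by blast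
      then show ?thesis using S' unfolding representative_def by blast
    qed
    define f where "f = (\<lambda>u. SOME s. s \<in> S' \<and> s \<in> G (q u))"
    have f: "f u \<in> S' \<and> f u \<in> G (q u)" if "u \<in> U" for u
      unfolding f_def using sex[OF that] by (rule someI_ex)
    have inl: "q u \<in> level G (f u)" if "u \<in> U" for u
      using f[OF that] q[OF that] unfolding level_def by blast
    have key: "level G (f u) \<subseteq> level G u" if u: "u \<in> U" for u
    proof -
      obtain w where w: "level G (f u) \<subseteq> level G w" "w \<notin> red UNIV G"
        using maximal_above[OF H] by blast
      obtain u' where u': "u' \<in> U" "level G w = level G u'"
        using trim_sub[OF H U(1) U(5) w(2)] by blast
      have "q u \<in> level G u'" using inl[OF u] w u' by blast
      then have "u' = u" using q[OF u] u' by blast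
      then show ?thesis using w u' by blast
    qed
    have "inj_on f U"
    proof (rule inj_onI)
      fix u v assume u: "u \<in> U" and v: "v \<in> U" and e: "f u = f v"
      have "q v \<in> level G u" using inl[OF v] key[OF u] e by auto
      then show "u = v" using q[OF v] u by blast
    qed
    then show ?thesis using f by blast
  qed
  then show ?thesis using rep U(1) unfolding min_representative_def by blast
qed

lemma MU:
  fixes G :: "real^'y \<Rightarrow> 'r set"
  assumes H: "\<forall>p\<in>prob_simplex. G p = {r\<in>UNIV. \<forall>r'\<in>UNIV. p \<bullet> L r \<le> p \<bullet> L r'}"
    and U: "finite U" "min_representative UNIV G U"
  shows "trim UNIV G = level G ` U"
proof
  have rep: "representative UNIV G U" using U(2) unfolding min_representative_def by blast
  note cov = rep_cov[OF rep]
  show "trim UNIV G \<subseteq> level G ` U" by (rule P32[OF H U(1) rep])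
  show "level G ` U \<subseteq> trim UNIV G"
  proof
    fix x assume "x \<in> level G ` U"
    then obtain u where u: "u \<in> U" "x = level G u" by blast
    have "u \<notin> red UNIV G"
    proof
      assume "u \<in> red UNIV G"
      then obtain r' where r': "level G u \<subset> level G r'" unfolding red_def by blast
      obtain w where w: "level G r' \<subseteq> level G w" "w \<notin> red UNIV G"
        using maximal_above[OF H] by blast
      obtain u' where u': "u' \<in> U" "level G w = level G u'"
        using trim_sub[OF H U(1) cov w(2)] by blast
      have lt: "level G u \<subset> level G u'" using r' w u' by blast
      then have "u' \<noteq> u" by blast
      have "representative UNIV G (U - {u})"
        unfolding representative_def
      proof (intro conjI ballI)
        show "U - {u} \<subseteq> UNIV" by simp
        fix p :: "real^'y" assume p: "p \<in> prob_simplex"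
        then obtain v where v: "v \<in> U" "v \<in> G p" using rep unfolding representative_def by blast
        show "G p \<inter> (U - {u}) \<noteq> {}"
        proof (cases "v = u")
          case True
          then have "p \<in> level G u" using v p unfolding level_def by blast
          then have "p \<in> level G u'" using lt by blast
          then have "u' \<in> G p" unfolding level_def by blast
          then show ?thesis using u' \<open>u' \<noteq> u\<close> by blast
        next
          case False
          then show ?thesis using v by blast
        qed
      qed
      then obtain f where f: "inj_on f U" "f ` U \<subseteq> U - {u}"
        using U(2) unfolding min_representative_def by blast
      have "card U \<le> card (U - {u})" using card_inj_on_le[OF f] U(1) by simp
      moreover have "card (U - {u}) < card U" using U(1) u(1) by (meson card_Diff1_less)
      ultimately show False by simp
    qed
    then show "x \<in> trim UNIV G" using u unfolding trim_def by blast
  qed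
qed

lemma P24:
  fixes G :: "real^'y \<Rightarrow> 'r set"
  assumes H: "\<forall>p\<in>prob_simplex. G p = {r\<in>UNIV. \<forall>r'\<in>UNIV. p \<bullet> L r \<le> p \<bullet> L r'}"
    and NE: "\<forall>p\<in>prob_simplex. G p \<noteq> {}"
    and fin: "finite (trim UNIV G)"
  shows "\<forall>A\<in>trim UNIV G. (\<exists>u. A = level G u) \<and> full_dim A"
    and "\<Union>(trim UNIV G) = prob_simplex"
proof -
  obtain U where U: "finite U" "\<forall>u\<in>U. u \<notin> red UNIV G" "level G ` U = trim UNIV G"
    "inj_on (level G) U" "\<forall>p\<in>prob_simplex. \<exists>u\<in>U. p \<in> level G u"
    using trim_cov_U[OF H NE fin] by blast
  show "\<forall>A\<in>trim UNIV G. (\<exists>u. A = level G u) \<and> full_dim A"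
  proof
    fix A assume "A \<in> trim UNIV G"
    then obtain r where r: "r \<notin> red UNIV G" "A = level G r" unfolding trim_def by blast
    then show "(\<exists>u. A = level G u) \<and> full_dim A"
      using full_lemma[OF H U(1) U(5) r(1)] by blast
  qed
  show "\<Union>(trim UNIV G) = prob_simplex"
  proof
    show "\<Union>(trim UNIV G) \<subseteq> prob_simplex"
      unfolding trim_def level_def by blast
    show "prob_simplex \<subseteq> \<Union>(trim UNIV G)"
    proof
      fix p :: "real^'y" assume p: "p \<in> prob_simplex"
      obtain w where w: "w \<notin> red UNIV G" "p \<in> level G w" using cov_trim[OF H NE p] by blast
      then show "p \<in> \<Union>(trim UNIV G)" unfolding trim_def by blast
    qed
  qed
qed

lemma P4:
  fixes G :: "real^'y \<Rightarrow> 'r set"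
  assumes H: "\<forall>p\<in>prob_simplex. G p = {r\<in>UNIV. \<forall>r'\<in>UNIV. p \<bullet> L r \<le> p \<bullet> L r'}"
    and T: "finite \<Theta>" "\<forall>A\<in>\<Theta>. (\<exists>u. A = level G u) \<and> full_dim A" "\<Union>\<Theta> = prob_simplex"
  shows "trim UNIV G = \<Theta>"
proof -
  define c where "c = (\<lambda>A. SOME u. A = level G u)"
  have c: "A = level G (c A)" if "A \<in> \<Theta>" for A
    unfolding c_def using T(2) that by (metis (mono_tags) someI_ex)
  define U where "U = c ` \<Theta>"
  have fU: "finite U" using T(1) by (simp add: U_def)
  have cov: "\<forall>p\<in>prob_simplex. \<exists>u\<in>U. p \<in> level G u"
  proof
    fix p :: "real^'y" assume "p \<in> prob_simplex"
    then obtain A where "A \<in> \<Theta>" "p \<in> A" using T(3) by blast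
    then show "\<exists>u\<in>U. p \<in> level G u" using c unfolding U_def by blast
  qed
  show ?thesis
  proof
    show "trim UNIV G \<subseteq> \<Theta>"
    proof
      fix x assume "x \<in> trim UNIV G"
      then obtain r where r: "r \<notin> red UNIV G" "x = level G r" unfolding trim_def by blast
      obtain u where u: "u \<in> U" "level G r = level G u" using trim_sub[OF H fU cov r(1)] by blast
      then obtain A where "A \<in> \<Theta>" "u = c A" unfolding U_def by blast
      then show "x \<in> \<Theta>" using c r(2) u(2) by metis
    qed
    show "\<Theta> \<subseteq> trim UNIV G"
    proof
      fix A assume A: "A \<in> \<Theta>"
      then have "full_dim (level G (c A))" using c T(2) by metis
      then have "c A \<notin> red UNIV G" by (rule full_dim_nonred[OF H])
      then show "A \<in> trim UNIV G" using c[OF A] unfolding trim_def by blast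
    qed
  qed
qed


lemma P21:
  fixes G :: "real^'y \<Rightarrow> 'd set"
  assumes el: "elicitable UNIV G" and fin: "finite (trim UNIV G)"
  shows "\<exists>(R::nat set) g. finite R \<and> elicitable R g \<and> embeds G R g"
proof -
  obtain L where L0: "\<forall>r\<in>UNIV. \<forall>y. 0 \<le> L r $ y"
    and HN: "\<forall>p\<in>prob_simplex. G p = {r\<in>UNIV. \<forall>r'\<in>UNIV. p \<bullet> L r \<le> p \<bullet> L r'} \<and> G p \<noteq> {}"
    using el unfolding elicitable_def by blast
  have H: "\<forall>p\<in>prob_simplex. G p = {r\<in>UNIV. \<forall>r'\<in>UNIV. p \<bullet> L r \<le> p \<bullet> L r'}" using HN by blast
  have NE: "\<forall>p\<in>prob_simplex. G p \<noteq> {}" using HN by blast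
  obtain U where U: "finite U" "\<forall>p\<in>prob_simplex. \<exists>u\<in>U. p \<in> level G u"
    using trim_cov_U[OF H NE fin] by blast
  obtain e where e: "bij_betw e {0..<card U} U" using ex_bij_betw_nat_finite[OF U(1)] by blast
  define R where "R = {0..<card U}"
  have eR: "e ` R = U" using e unfolding R_def bij_betw_def by blast
  have ie: "inj_on e R" using e unfolding R_def bij_betw_def by blast
  define g where "g = (\<lambda>p. {k\<in>R. e k \<in> G p})"
  have k0: "\<exists>k0\<in>R. e k0 \<in> G p" if p: "p \<in> prob_simplex" for p
  proof -
    obtain u where "u \<in> U" "p \<in> level G u" using U(2) p by blast
    then show ?thesis using eR unfolding level_def by blast
  qed
  have "elicitable R g"
    unfolding elicitable_def
  proof (intro exI[of _ "\<lambda>k. L (e k)"] conjI ballI)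
    show "\<forall>y. 0 \<le> L (e k) $ y" for k using L0 by blast
    fix p :: "real^'y" assume p: "p \<in> prob_simplex"
    obtain k0 where k0: "k0 \<in> R" "e k0 \<in> G p" using k0[OF p] by blast
    show "g p \<noteq> {}" using k0 unfolding g_def by blast
    show "g p = {k\<in>R. \<forall>k'\<in>R. p \<bullet> L (e k) \<le> p \<bullet> L (e k')}"
    proof
      show "g p \<subseteq> {k\<in>R. \<forall>k'\<in>R. p \<bullet> L (e k) \<le> p \<bullet> L (e k')}"
        using H p unfolding g_def by auto
      show "{k\<in>R. \<forall>k'\<in>R. p \<bullet> L (e k) \<le> p \<bullet> L (e k')} \<subseteq> g p"
      proof
        fix k assume k: "k \<in> {k\<in>R. \<forall>k'\<in>R. p \<bullet> L (e k) \<le> p \<bullet> L (e k')}"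
        then have "p \<bullet> L (e k) \<le> p \<bullet> L (e k0)" using k0 by blast
        moreover have "\<forall>r'. p \<bullet> L (e k0) \<le> p \<bullet> L r'" using k0 H p by blast
        ultimately have "\<forall>r'. p \<bullet> L (e k) \<le> p \<bullet> L r'" by (meson order_trans)
        then show "k \<in> g p" using k H p unfolding g_def by blast
      qed
    qed
  qed
  moreover have "embeds G R g"
    unfolding embeds_def
  proof (intro exI[of _ R] exI[of _ e] conjI ballI)
    show "representative R g R"
      unfolding representative_def using k0 unfolding g_def by blast
    show "inj_on e R" by (rule ie)
    fix s assume "s \<in> R"
    then show "level g s = level G (e s)" unfolding level_def g_def by auto
  qed
  moreover have "finite R" by (simp add: R_def)
  ultimately show ?thesis by blast
qed

lemma Mg:
  fixes G :: "real^'y \<Rightarrow> 'd set" and g :: "real^'y \<Rightarrow> 'r set"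
  assumes H: "\<forall>p\<in>prob_simplex. G p = {r\<in>UNIV. \<forall>r'\<in>UNIV. p \<bullet> L r \<le> p \<bullet> L r'}"
    and R: "finite R" and el: "elicitable R g" and emb: "embeds G R g"
  shows "trim R g = trim UNIV G"
proof -
  obtain L' where Hg: "\<forall>p\<in>prob_simplex. g p = {r\<in>R. \<forall>r'\<in>R. p \<bullet> L' r \<le> p \<bullet> L' r'}"
    using el unfolding elicitable_def by blast
  obtain S \<phi> where S: "representative R g S" "inj_on \<phi> S" "\<forall>s\<in>S. level g s = level G (\<phi> s)"
    using emb unfolding embeds_def by blast
  have SR: "S \<subseteq> R" using S(1) unfolding representative_def by blast
  have fS: "finite S" using SR R by (metis finite_subset)
  have covS: "\<forall>p\<in>prob_simplex. \<exists>s\<in>S. p \<in> level g s" by (rule rep_cov[OF S(1)])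
  have cov: "\<forall>p\<in>prob_simplex. \<exists>u\<in>\<phi> ` S. p \<in> level G u"
    using covS S(3) by fastforce
  have Gsub: "\<exists>s\<in>S. level G r = level g s" if r: "r \<notin> red UNIV G" for r
    using trim_sub[OF H finite_imageI[OF fS] cov r] S(3) by force
  have Sne: "S \<noteq> {}" using covS unif_simplex[where 'y='y] by blast
  have gsub: "\<exists>s\<in>S. level g r \<subseteq> level g s" if r: "r \<in> R" for r
  proof -
    have "level g r \<subseteq> (\<Union>j\<in>S. level g j)"
    proof
      fix x assume "x \<in> level g r"
      then have "x \<in> prob_simplex" using level_sub_simplex[of g r] by blast
      then show "x \<in> (\<Union>j\<in>S. level g j)" using covS by blast
    qed
    then show ?thesis using cover[OF Hg r fS SR Sne] by blast
  qed
  show ?thesis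
  proof
    show "trim R g \<subseteq> trim UNIV G"
    proof
      fix x assume "x \<in> trim R g"
      then obtain r where r: "r \<in> R" "r \<notin> red R g" "x = level g r" unfolding trim_def by blast
      obtain s where s: "s \<in> S" "level g r \<subseteq> level g s" using gsub[OF r(1)] by blast
      have eq: "level g r = level g s" using r s SR unfolding red_def by blast
      have "\<phi> s \<notin> red UNIV G"
      proof
        assume "\<phi> s \<in> red UNIV G"
        then obtain w where w: "level G (\<phi> s) \<subset> level G w" unfolding red_def by blast
        obtain w' where w': "level G w \<subseteq> level G w'" "w' \<notin> red UNIV G"
          using maximal_above[OF H] by blast
        obtain s' where s': "s' \<in> S" "level G w' = level g s'" using Gsub[OF w'(2)] by blast
        have "level g r \<subset> level g s'" using eq S(3) s(1) w w' s' by auto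
        then show False using r(1,2) s'(1) SR unfolding red_def by blast
      qed
      then show "x \<in> trim UNIV G" using eq r(3) S(3) s(1) unfolding trim_def by auto
    qed
    show "trim UNIV G \<subseteq> trim R g"
    proof
      fix x assume "x \<in> trim UNIV G"
      then obtain r where r: "r \<notin> red UNIV G" "x = level G r" unfolding trim_def by blast
      obtain s where s: "s \<in> S" "level G r = level g s" using Gsub[OF r(1)] by blast
      have "s \<notin> red R g"
      proof
        assume "s \<in> red R g"
        then obtain r' where r': "r' \<in> R" "level g s \<subset> level g r'" unfolding red_def by blast
        obtain s'' where s'': "s'' \<in> S" "level g r' \<subseteq> level g s''" using gsub[OF r'(1)] by blast
        have "level G r \<subset> level G (\<phi> s'')" using s r' s'' S(3) by auto
        then show False using r(1) unfolding red_def by blast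
      qed
      then show "x \<in> trim R g" using s SR r(2) unfolding trim_def by auto
    qed
  qed
qed


theorem proposition6:
  fixes G :: "real ^ 'y \<Rightarrow> (real ^ 'd) set"
  assumes "elicitable UNIV G"
  shows "((\<exists>(R :: nat set) g. finite R \<and> elicitable R g \<and> embeds G R g)
           \<longleftrightarrow> finite (trim UNIV G))
       \<and> (finite (trim UNIV G) \<longleftrightarrow> (\<exists>U. finite U \<and> min_representative UNIV G U))
       \<and> ((\<exists>U. finite U \<and> min_representative UNIV G U) \<longleftrightarrow>
           (\<exists>\<Theta>. finite \<Theta> \<and> (\<forall>A\<in>\<Theta>. (\<exists>u. A = level G u) \<and> full_dim A)
                 \<and> \<Union>\<Theta> = prob_simplex))
       \<and> (finite (trim UNIV G) \<longrightarrow>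
           (\<forall>(R :: 'r set) g. finite R \<and> elicitable R g \<and> embeds G R g
               \<longrightarrow> trim R g = trim UNIV G)
         \<and> (\<forall>U. finite U \<and> min_representative UNIV G U \<longrightarrow> trim UNIV G = level G ` U)
         \<and> (\<forall>\<Theta>. finite \<Theta> \<and> (\<forall>A\<in>\<Theta>. (\<exists>u. A = level G u) \<and> full_dim A)
                 \<and> \<Union>\<Theta> = prob_simplex \<longrightarrow> trim UNIV G = \<Theta>))"
proof -
  obtain L where HN: "\<forall>p\<in>prob_simplex. G p = {r\<in>UNIV. \<forall>r'\<in>UNIV. p \<bullet> L r \<le> p \<bullet> L r'} \<and> G p \<noteq> {}"
    using assms unfolding elicitable_def by blast
  have H: "\<forall>p\<in>prob_simplex. G p = {r\<in>UNIV. \<forall>r'\<in>UNIV. p \<bullet> L r \<le> p \<bullet> L r'}" using HN by blast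
  have NE: "\<forall>p\<in>prob_simplex. G p \<noteq> {}" using HN by blast
  have e12: "(\<exists>(R :: nat set) g. finite R \<and> elicitable R g \<and> embeds G R g) \<longleftrightarrow> finite (trim UNIV G)"
    using P12[OF H] P21[OF assms] by blast
  have e23: "finite (trim UNIV G) \<longleftrightarrow> (\<exists>U. finite U \<and> min_representative UNIV G U)"
  proof
    assume "finite (trim UNIV G)" then show "\<exists>U. finite U \<and> min_representative UNIV G U"
      by (rule P23[OF H NE])
  next
    assume "\<exists>U. finite U \<and> min_representative UNIV G U"
    then obtain U where U: "finite U" "representative UNIV G U"
      unfolding min_representative_def by blast
    then show "finite (trim UNIV G)" using P32[OF H U] finite_subset by blast
  qed
  have e34: "(\<exists>U. finite U \<and> min_representative UNIV G U) \<longleftrightarrow>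
           (\<exists>\<Theta>. finite \<Theta> \<and> (\<forall>A\<in>\<Theta>. (\<exists>u. A = level G u) \<and> full_dim A)
                 \<and> \<Union>\<Theta> = prob_simplex)"
  proof
    assume "\<exists>U. finite U \<and> min_representative UNIV G U"
    then have f: "finite (trim UNIV G)" using e23 by blast
    show "\<exists>\<Theta>. finite \<Theta> \<and> (\<forall>A\<in>\<Theta>. (\<exists>u. A = level G u) \<and> full_dim A) \<and> \<Union>\<Theta> = prob_simplex"
      using P24[OF H NE f] f by blast
  next
    assume "\<exists>\<Theta>. finite \<Theta> \<and> (\<forall>A\<in>\<Theta>. (\<exists>u. A = level G u) \<and> full_dim A) \<and> \<Union>\<Theta> = prob_simplex"
    then obtain \<Theta> where T: "finite \<Theta>" "\<forall>A\<in>\<Theta>. (\<exists>u. A = level G u) \<and> full_dim A" "\<Union>\<Theta> = prob_simplex"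
      by blast
    then have "finite (trim UNIV G)" using P4[OF H T] by simp
    then show "\<exists>U. finite U \<and> min_representative UNIV G U" using e23 by blast
  qed
  have m1: "\<forall>(R :: 'r set) g. finite R \<and> elicitable R g \<and> embeds G R g \<longrightarrow> trim R g = trim UNIV G"
    using Mg[OF H] by blast
  have m2: "\<forall>U. finite U \<and> min_representative UNIV G U \<longrightarrow> trim UNIV G = level G ` U"
    using MU[OF H] by blast
  have m3: "\<forall>\<Theta>. finite \<Theta> \<and> (\<forall>A\<in>\<Theta>. (\<exists>u. A = level G u) \<and> full_dim A)
                 \<and> \<Union>\<Theta> = prob_simplex \<longrightarrow> trim UNIV G = \<Theta>"
    using P4[OF H] by blast
  show ?thesis using e12 e23 e34 m1 m2 m3 by blast
qed

end
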